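(* For every integer $k\ge6$ and every real $r>1$ there is a constant $c>0$ such that for every even integer $n\ge2$ there exists a unit disk graph $G=(V,E)$ with $|V|=n$ such that each of the Yao-Yao graph $YY_k$, the Yao-Sink graph $YS_k$, and the Yao-Sparse-Sink graph $YES_k$ (with parameter $r$) of $G$ has weight at least $c\,n\cdot wt(MST(V))$.
   Context: Unit disk graph: $V$ a finite point set in the plane, $E=\{uv:|uv|\le1\}$ with $|uv|$ Euclidean distance. $wt(H)$ is the sum of Euclidean lengths of the edges of $H$ (viewed as an undirected graph); $MST(V)$ is a Euclidean minimum spanning tree of $V$. Cones: with $\theta=2\pi/k$, at each point $x$ the plane is partitioned into $k$ half-open half-closed cones with apex $x$ of angle $\theta$, bounded by $k$ equally spaced rays (same directions at every node). Identifiers: nodes have distinct IDs; $\mathrm{ID}(\overrightarrow{xy})=(|xy|,\mathrm{ID}(x),\mathrm{ID}(y))$ compared lexicographically; $\mathrm{ID}(xy)=\min\{\mathrm{ID}(\overrightarrow{xy}),\mathrm{ID}(\overrightarrow{yx})\}$. Yao step: for each node $x$ and each cone $K_x$ containing the other endpoint of some edge of $E$ incident to $x$, add to $E_Y$ the directed edge $\overrightarrow{xy}$ where $xy$ is such an edge with lowest $\mathrm{ID}(xy)$. Reverse Yao step: from $E_{YY}=E_Y$, for each node $v$ and each cone $K_v$, among edges $\overrightarrow{xv}\in E_Y$ with $x\in K_v$ keep only the one of smallest ID; $YY_k=(V,E_{YY})$. Sink step on a directed edge set $D$: for each node $v$ and cone $K_v$: let $I$ be the set of $x$ with $\overrightarrow{xv}\in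 D$, $x\in K_v$; set $I(v)\leftarrow I$, $J\leftarrow(v)$, $T(v)\leftarrow\emptyset$; repeat until $I$ is empty: remove the first vertex $x$ of $J$; for each cone $K_x$, let $w\in I(x)\cap K_x$ minimize $\mathrm{ID}(\overrightarrow{wx})$ (if any), add $\overrightarrow{wx}$ to $T(v)$, move $w$ from $I$ to $J$, set $I(w)\leftarrow I(x)\cap K_x$; output the union of all $T(v)$. $YS_k$ is the Sink step applied to $E_Y$. Filtering step (parameter $r>1$): for each node $v$ and cone $K_v$, let $F$ be the set of $\overrightarrow{xv}\in E_Y$ with $x\in K_v$; if nonempty let $\overrightarrow{uv}$ be its minimum-ID edge, let $F_i=\{\overrightarrow{ab}\in F:|uv|r^{i-1}\le|ab|<|uv|r^i\}$ for $i\ge1$, and put into $E_{YE}$ the smallest-ID edge of each nonempty $F_i$. $YES_k$ is the Sink step applied to $E_{YE}$. All outputs are viewed as undirected graphs. *)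

theory Defs
  imports "HOL-Analysis.Analysis"
begin

text \<open>Points of the plane are complex numbers; distance is the Euclidean distance.\<close>

text \<open>Cone partition: \<theta> = 2 pi / k, rays in the directions phi + j \<theta> (j = 0..k-1), the same
  at every node.  Cone number i at apex x is the half-open sector of directions
  [phi + i \<theta>, phi + (i+1) \<theta>); the apex itself belongs to no cone.\<close>
definition cone_of :: "real \<Rightarrow> nat \<Rightarrow> complex \<Rightarrow> complex \<Rightarrow> nat" where
  "cone_of phi k x y = nat \<lfloor>real k * frac ((Arg (y - x) - phi) / (2 * pi))\<rfloor>"

definition incone :: "real \<Rightarrow> nat \<Rightarrow> complex \<Rightarrow> nat \<Rightarrow> complex \<Rightarrow> bool" where
  "incone phi k x i y \<longleftrightarrow> y \<noteq> x \<and> cone_of phi k x y = i"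

definition dkey :: "(complex \<Rightarrow> nat) \<Rightarrow> complex \<Rightarrow> complex \<Rightarrow> real \<times> nat \<times> nat" where
  "dkey ID x y = (dist x y, ID x, ID y)"

fun klt :: "real \<times> nat \<times> nat \<Rightarrow> real \<times> nat \<times> nat \<Rightarrow> bool" where
  "klt (a1, b1, c1) (a2, b2, c2) \<longleftrightarrow> a1 < a2 \<or> (a1 = a2 \<and> (b1 < b2 \<or> (b1 = b2 \<and> c1 < c2)))"

definition ukey :: "(complex \<Rightarrow> nat) \<Rightarrow> complex \<Rightarrow> complex \<Rightarrow> real \<times> nat \<times> nat" where
  "ukey ID x y = (if klt (dkey ID y x) (dkey ID x y) then dkey ID y x else dkey ID x y)"

definition amin :: "('a \<Rightarrow> real \<times> nat \<times> nat) \<Rightarrow> 'a set \<Rightarrow> 'a" where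
  "amin f S = (THE s. s \<in> S \<and> (\<forall>t\<in>S. t \<noteq> s \<longrightarrow> klt (f s) (f t)))"

definition udg :: "complex set \<Rightarrow> (complex \<times> complex) set" where
  "udg V = {(x, y). x \<in> V \<and> y \<in> V \<and> x \<noteq> y \<and> dist x y \<le> 1}"

definition yao :: "real \<Rightarrow> nat \<Rightarrow> (complex \<Rightarrow> nat) \<Rightarrow> complex set \<Rightarrow> (complex \<times> complex) set" where
  "yao phi k ID V = (\<Union>x\<in>V. \<Union>i\<in>{..<k}.
      (let N = {y. (x, y) \<in> udg V \<and> incone phi k x i y}
       in if N = {} then {} else {(x, amin (ukey ID x) N)}))"

definition yaoyao :: "real \<Rightarrow> nat \<Rightarrow> (complex \<Rightarrow> nat) \<Rightarrow> complex set \<Rightarrow> (complex \<times> complex) set" where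
  "yaoyao phi k ID V = (\<Union>v\<in>V. \<Union>i\<in>{..<k}.
      (let F = {(a, b). (a, b) \<in> yao phi k ID V \<and> b = v \<and> incone phi k v i a}
       in if F = {} then {} else {amin (\<lambda>(a, b). dkey ID a b) F}))"

text \<open>The tree T(x) built by the Sink procedure from node x whose current set is I(x) = S.
  The breadth-first procedure of the paper builds, for each cone K_x with I(x) \<inter> K_x
  nonempty, the edge wx-> (w of minimal ID(wx->)) and then recursively the same
  construction from w with I(w) = I(x) \<inter> K_x; the order of processing is irrelevant.
  The first argument is fuel (recursion depth); Suc (card V) always suffices.\<close>
fun sink_tree :: "real \<Rightarrow> nat \<Rightarrow> (complex \<Rightarrow> nat) \<Rightarrow> nat \<Rightarrow> complex \<Rightarrow> complex set
                  \<Rightarrow> (complex \<times> complex) set" where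
  "sink_tree phi k ID 0 x S = {}"
| "sink_tree phi k ID (Suc n) x S = (\<Union>i\<in>{..<k}.
      (let C = {y \<in> S. incone phi k x i y}
       in if C = {} then {}
          else (let w = amin (\<lambda>w. dkey ID w x) C
                in insert (w, x) (sink_tree phi k ID n w C))))"

definition sink :: "real \<Rightarrow> nat \<Rightarrow> (complex \<Rightarrow> nat) \<Rightarrow> complex set \<Rightarrow> (complex \<times> complex) set
                    \<Rightarrow> (complex \<times> complex) set" where
  "sink phi k ID V D = (\<Union>v\<in>V. \<Union>i\<in>{..<k}.
      sink_tree phi k ID (Suc (card V)) v {x. (x, v) \<in> D \<and> incone phi k v i x})"

definition yaosink :: "real \<Rightarrow> nat \<Rightarrow> (complex \<Rightarrow> nat) \<Rightarrow> complex set \<Rightarrow> (complex \<times> complex) set" where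
  "yaosink phi k ID V = sink phi k ID V (yao phi k ID V)"

definition filtering :: "real \<Rightarrow> nat \<Rightarrow> (complex \<Rightarrow> nat) \<Rightarrow> real \<Rightarrow> complex set
                         \<Rightarrow> (complex \<times> complex) set" where
  "filtering phi k ID r V = (\<Union>v\<in>V. \<Union>i\<in>{..<k}.
      (let F = {(a, b). (a, b) \<in> yao phi k ID V \<and> b = v \<and> incone phi k v i a}
       in if F = {} then {}
          else (let L = dist (fst (amin (\<lambda>(a, b). dkey ID a b) F)) v
                in \<Union>j\<in>{1::nat..}.
                   (let Fj = {(a, b) \<in> F. L * r ^ (j - 1) \<le> dist a b \<and> dist a b < L * r ^ j}
                    in if Fj = {} then {} else {amin (\<lambda>(a, b). dkey ID a b) Fj}))))"

definition yaosparsesink :: "real \<Rightarrow> nat \<Rightarrow> (complex \<Rightarrow> nat) \<Rightarrow> real \<Rightarrow> complex set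
                             \<Rightarrow> (complex \<times> complex) set" where
  "yaosparsesink phi k ID r V = sink phi k ID V (filtering phi k ID r V)"

text \<open>Weight of a directed edge set viewed as an undirected graph: each undirected edge
  occurs twice in the symmetric closure.\<close>
definition wt :: "(complex \<times> complex) set \<Rightarrow> real" where
  "wt D = (\<Sum>p \<in> D \<union> converse D. dist (fst p) (snd p)) / 2"

definition elen :: "complex set \<Rightarrow> real" where
  "elen e = (THE d. \<exists>x y. e = {x, y} \<and> d = dist x y)"

definition spanning_tree :: "complex set \<Rightarrow> complex set set \<Rightarrow> bool" where
  "spanning_tree V T \<longleftrightarrow>
     T \<subseteq> {{x, y} | x y. x \<in> V \<and> y \<in> V \<and> x \<noteq> y} \<and>
     card T = card V - 1 \<and>
     (\<forall>x\<in>V. \<forall>y\<in>V. (x, y) \<in> {(a, b). {a, b} \<in> T}\<^sup>*)"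

definition wt_MST :: "complex set \<Rightarrow> real" where
  "wt_MST V = Min ((\<lambda>T. \<Sum>e\<in>T. elen e) ` {T. spanning_tree V T})"

end

theory Submission imports Defs begin

lemma Arg_vert: assumes "Re z = 0" "z \<noteq> 0" shows "\<bar>Arg z\<bar> = pi/2"
  using Arg_Re_nonneg[of z] Arg_Re_pos[of z] assms by linarith

lemma cone_of_lt: "k > 0 \<Longrightarrow> cone_of phi k x y < k"
proof -
  assume k: "k > 0"
  define f where "f = frac ((Arg (y - x) - phi) / (2 * pi))"
  have "f < 1" "0 \<le> f" unfolding f_def using frac_lt_1 frac_ge_0 by auto
  hence "real k * f < real k" using k by simp
  hence "\<lfloor>real k * f\<rfloor> < int k" by (simp add: floor_less_iff)
  thus ?thesis unfolding cone_of_def f_def[symmetric] using k by (simp add: nat_less_iff)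
qed

lemma cone_ne:
  assumes k: "k \<ge> 6" and A1: "Arg (y1 - x1) = 0 \<or> Arg (y1 - x1) = pi"
    and A2: "\<bar>Arg (y2 - x2)\<bar> = pi/2"
  shows "cone_of phi k x1 y1 \<noteq> cone_of phi k x2 y2"
proof
  assume eq: "cone_of phi k x1 y1 = cone_of phi k x2 y2"
  define u1 where "u1 = (Arg (y1 - x1) - phi) / (2 * pi)"
  define u2 where "u2 = (Arg (y2 - x2) - phi) / (2 * pi)"
  have "\<exists>d::int. 4 * (u1 - u2) = 2 * d + 1"
  proof -
    have "4 * (u1 - u2) = 2 * (Arg (y1 - x1) - Arg (y2 - x2)) / pi"
      unfolding u1_def u2_def by (simp add: field_simps)
    moreover have "Arg (y2 - x2) = pi/2 \<or> Arg (y2 - x2) = - (pi/2)" using A2 by linarith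
    ultimately show ?thesis using A1
      apply (elim disjE)
      apply (rule exI[of _ "-1"], simp)
      apply (rule exI[of _ "0"], simp)
      apply (rule exI[of _ "0"], simp add: field_simps)
      apply (rule exI[of _ "1"], simp add: field_simps)
      done
  qed
  then obtain d :: int where d: "4 * (u1 - u2) = 2 * real_of_int d + 1" by blast
  define f1 where "f1 = frac u1"
  define f2 where "f2 = frac u2"
  have "4 * (f1 - f2) = of_int (2 * d + 1 - 4 * (\<lfloor>u1\<rfloor> - \<lfloor>u2\<rfloor>))"
    unfolding f1_def f2_def frac_def using d by simp
  moreover have "2 * d + 1 - 4 * (\<lfloor>u1\<rfloor> - \<lfloor>u2\<rfloor>) \<noteq> 0" by presburger
  ultimately obtain e :: int where e: "4 * (f1 - f2) = of_int e" "e \<noteq> 0" by blast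
  have "e \<ge> 1 \<or> e \<le> -1" using e(2) by linarith
  hence "real_of_int e \<ge> 1 \<or> real_of_int e \<le> -1" by (metis of_int_le_iff of_int_1 of_int_minus)
  moreover have "f1 - f2 = real_of_int e / 4" using e(1) by simp
  ultimately have ge: "f1 - f2 \<ge> 1/4 \<or> f2 - f1 \<ge> 1/4" by auto
  have nn1: "\<lfloor>real k * f1\<rfloor> \<ge> 0" "\<lfloor>real k * f2\<rfloor> \<ge> 0"
    unfolding f1_def f2_def by (simp_all add: frac_ge_0)
  have "nat \<lfloor>real k * f1\<rfloor> = nat \<lfloor>real k * f2\<rfloor>"
    using eq unfolding cone_of_def f1_def f2_def u1_def u2_def .
  hence fl: "\<lfloor>real k * f1\<rfloor> = \<lfloor>real k * f2\<rfloor>" using nn1 eq_nat_nat_iff by blast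
  have lt: "real k * f1 - real k * f2 < 1" "real k * f2 - real k * f1 < 1"
    using fl floor_correct[of "real k * f1"] floor_correct[of "real k * f2"] by linarith+
  have k6: "real k \<ge> 6" using k by simp
  show False using ge
  proof
    assume "f1 - f2 \<ge> 1/4"
    hence "real k * (f1 - f2) \<ge> 6 * (1/4)" using k6 by (intro mult_mono) auto
    thus False using lt by (simp add: right_diff_distrib)
  next
    assume "f2 - f1 \<ge> 1/4"
    hence "real k * (f2 - f1) \<ge> 6 * (1/4)" using k6 by (intro mult_mono) auto
    thus False using lt by (simp add: right_diff_distrib)
  qed
qed


lemma klt_irrefl: "\<not> klt a a"
  by (cases a) auto

lemma klt_asym: "klt a b \<Longrightarrow> \<not> klt b a"
  by (cases a; cases b) auto

lemma klt_trans: "klt a b \<Longrightarrow> klt b c \<Longrightarrow> klt a c"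
  by (cases a; cases b; cases c) auto

lemma klt_total: "a \<noteq> b \<Longrightarrow> klt a b \<or> klt b a"
  by (cases a; cases b) auto

lemma amin_exists:
  assumes "finite S" "S \<noteq> {}" "inj_on f S"
  shows "\<exists>s\<in>S. \<forall>t\<in>S. t \<noteq> s \<longrightarrow> klt (f s) (f t)"
  using assms
proof (induction S rule: finite_ne_induct)
  case (singleton x) then show ?case by auto
next
  case (insert x F)
  then obtain s where s: "s \<in> F" "\<forall>t\<in>F. t \<noteq> s \<longrightarrow> klt (f s) (f t)" by auto
  have "f x \<noteq> f s" using insert.prems insert.hyps s(1) by (metis inj_on_insert inj_on_contraD insertI1 insertI2)
  then consider "klt (f x) (f s)" | "klt (f s) (f x)" using klt_total by blast
  then show ?case
  proof cases
    case 1
    show ?thesis using 1 s insert.hyps by (intro bexI[of _ x]) (auto intro: klt_trans)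
  next
    case 2
    show ?thesis using 2 s by (intro bexI[of _ s]) auto
  qed
qed

lemma amin_in:
  assumes "finite S" "S \<noteq> {}" "inj_on f S"
  shows "amin f S \<in> S"
proof -
  obtain s where s: "s \<in> S" "\<forall>t\<in>S. t \<noteq> s \<longrightarrow> klt (f s) (f t)" using amin_exists[OF assms] by blast
  have "amin f S = s" unfolding amin_def
  proof (rule the_equality)
    show "s \<in> S \<and> (\<forall>t\<in>S. t \<noteq> s \<longrightarrow> klt (f s) (f t))" using s by blast
  next
    fix s' assume h: "s' \<in> S \<and> (\<forall>t\<in>S. t \<noteq> s' \<longrightarrow> klt (f s') (f t))"
    show "s' = s"
    proof (rule ccontr)
      assume "s' \<noteq> s"
      hence "klt (f s) (f s')" "klt (f s') (f s)" using h s by auto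
      thus False using klt_asym by blast
    qed
  qed
  thus ?thesis using s by simp
qed

lemma amin_single: "amin f {a} = a"
  unfolding amin_def by (rule the_equality) auto

lemma ukey_inj:
  assumes "inj_on ID V" "x \<in> V" "N \<subseteq> V - {x}"
  shows "inj_on (ukey ID x) N"
proof (rule inj_onI)
  fix y1 y2 assume h: "y1 \<in> N" "y2 \<in> N" "ukey ID x y1 = ukey ID x y2"
  have v: "y1 \<in> V" "y2 \<in> V" "y1 \<noteq> x" "y2 \<noteq> x" using h assms by auto
  have ne: "ID y1 \<noteq> ID x" "ID y2 \<noteq> ID x" using v assms(1,2) by (metis inj_on_contraD)+
  show "y1 = y2"
    using h(3) ne v assms(1) unfolding ukey_def dkey_def
    by (auto split: if_splits dest: inj_onD)
qed

lemma dkey_inj: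
  assumes "inj_on ID V" "F \<subseteq> {(a, b). a \<in> V \<and> b = v}"
  shows "inj_on (\<lambda>(a, b). dkey ID a b) F"
proof (rule inj_onI)
  fix p1 p2 assume h: "p1 \<in> F" "p2 \<in> F" "(\<lambda>(a, b). dkey ID a b) p1 = (\<lambda>(a, b). dkey ID a b) p2"
  obtain a1 b1 a2 b2 where p: "p1 = (a1, b1)" "p2 = (a2, b2)" by (cases p1; cases p2)
  have "a1 \<in> V" "a2 \<in> V" "b1 = v" "b2 = v" using h(1,2) assms(2) p by auto
  moreover have "ID a1 = ID a2" using h(3) p unfolding dkey_def by simp
  ultimately show "p1 = p2" using p assms(1) by (auto dest: inj_onD)
qed

lemma yao_sub:
  assumes "inj_on ID V" "finite V" "(x, y) \<in> yao phi k ID V"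
  shows "(x, y) \<in> udg V"
proof -
  from assms(3) obtain i where x: "x \<in> V" and i: "i < k" and
    ne: "{y. (x, y) \<in> udg V \<and> incone phi k x i y} \<noteq> {}" and
    y: "y = amin (ukey ID x) {y. (x, y) \<in> udg V \<and> incone phi k x i y}"
    unfolding yao_def Let_def by (auto split: if_splits)
  let ?N = "{y. (x, y) \<in> udg V \<and> incone phi k x i y}"
  have sub: "?N \<subseteq> V - {x}" unfolding udg_def by auto
  have "finite ?N" using sub assms(2) finite_subset by blast
  hence "y \<in> ?N" using y ne amin_in ukey_inj[OF assms(1) x sub] by metis
  thus ?thesis by simp
qed

lemma filt_gen:
  assumes "(a, b) \<in> (let F = F0 in if F = {} then {} else
             (let L = dist (fst (amin key F)) v in
              \<Union>j\<in>{1::nat..}. (let Fj = {(a, b) \<in> F. L * r ^ (j - 1) \<le> dist a b \<and> dist a b < L * r ^ j}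
                  in if Fj = {} then {} else {amin key Fj})))"
  shows "finite F0 \<and> inj_on key F0 \<longrightarrow> (a, b) \<in> F0"
proof
  assume h: "finite F0 \<and> inj_on key F0"
  from assms obtain j where
    "(a, b) \<in> (let Fj = {(a, b) \<in> F0. dist (fst (amin key F0)) v * r ^ (j - 1) \<le> dist a b \<and> dist a b < dist (fst (amin key F0)) v * r ^ j}
                  in if Fj = {} then {} else {amin key Fj})"
    by (auto simp only: Let_def split: if_splits)
  moreover define Fj where "Fj = {(a, b) \<in> F0. dist (fst (amin key F0)) v * r ^ (j - 1) \<le> dist a b \<and> dist a b < dist (fst (amin key F0)) v * r ^ j}"
  ultimately have Fj: "Fj \<subseteq> F0" "Fj \<noteq> {}" "(a, b) = amin key Fj"
    unfolding Let_def Fj_def[symmetric] by (auto split: if_splits simp: Fj_def)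
  have "(a, b) \<in> Fj" using Fj h amin_in[of Fj key] finite_subset inj_on_subset by metis
  thus "(a, b) \<in> F0" using Fj by blast
qed

lemma filtering_sub:
  assumes ID: "inj_on ID V" and fin: "finite V" and ab: "(a, b) \<in> filtering phi k ID r V"
  shows "(a, b) \<in> yao phi k ID V"
  using ab unfolding filtering_def UN_iff
  apply (elim bexE)
  apply (drule filt_gen)
  apply (erule impE)
  subgoal for v i
  proof -
    assume v: "v \<in> V"
    let ?F = "{(a, b). (a, b) \<in> yao phi k ID V \<and> b = v \<and> incone phi k v i a}"
    have FV: "?F \<subseteq> {(a, b). a \<in> V \<and> b = v}"
      using yao_sub[OF ID fin] unfolding udg_def by auto
    have "finite ?F" using FV finite_subset[of ?F "V \<times> {v}"] fin by auto
    thus ?thesis using dkey_inj[OF ID FV] by blast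
  qed
  by simp

lemma sink_tree_fin: "finite (sink_tree phi k ID n x S)"
  by (induction n arbitrary: x S) (auto simp: Let_def)

lemma sink_fin: "finite V \<Longrightarrow> finite (sink phi k ID V D)"
  unfolding sink_def by (intro finite_UN_I finite_lessThan) (auto simp del: sink_tree.simps intro: sink_tree_fin)

lemma yaoyao_fin: "finite V \<Longrightarrow> finite (yaoyao phi k ID V)"
  unfolding yaoyao_def by (auto intro!: finite_UN_I simp: Let_def)

lemma sink_tree_mem:
  assumes "i < k" "incone phi k x i w" "S = {w}"
  shows "(w, x) \<in> sink_tree phi k ID (Suc n) x S"
proof -
  have C: "{y \<in> S. incone phi k x i y} = {w}" using assms by auto
  show ?thesis using assms(1) C
    by (simp only: sink_tree.simps Let_def) (auto simp: amin_single intro!: bexI[of _ i])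
qed


definition PP :: "real \<Rightarrow> nat \<Rightarrow> complex" where "PP d j = Complex 0 (real j * d)"
definition QQ :: "real \<Rightarrow> nat \<Rightarrow> complex" where "QQ d j = Complex 1 (real j * d)"
definition VV :: "nat \<Rightarrow> real \<Rightarrow> complex set" where "VV m d = PP d ` {..<m} \<union> QQ d ` {..<m}"

lemma dist_cplx: "dist (Complex a b) (Complex c e) = sqrt ((a - c)^2 + (b - e)^2)"
  by (simp add: dist_norm complex_norm complex_diff)

lemma dist_PP: "dist (PP d j) (PP d l) = \<bar>real j * d - real l * d\<bar>"
  unfolding PP_def dist_cplx by simp
lemma dist_QQ: "dist (QQ d j) (QQ d l) = \<bar>real j * d - real l * d\<bar>"
  unfolding QQ_def dist_cplx by simp
lemma dist_PQ: "dist (PP d j) (QQ d l) = sqrt (1 + (real j * d - real l * d)^2)"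
  unfolding PP_def QQ_def dist_cplx by simp

lemma PP_inj: "d > 0 \<Longrightarrow> PP d j = PP d l \<longleftrightarrow> j = l"
  unfolding PP_def by auto
lemma QQ_inj: "d > 0 \<Longrightarrow> QQ d j = QQ d l \<longleftrightarrow> j = l"
  unfolding QQ_def by auto
lemma PQ_ne: "PP d j \<noteq> QQ d l"
  unfolding PP_def QQ_def by auto

lemma dist_PQ_ge: "d > 0 \<Longrightarrow> dist (PP d j) (QQ d l) \<le> 1 \<Longrightarrow> j = l"
proof -
  assume d: "d > 0" and h: "dist (PP d j) (QQ d l) \<le> 1"
  hence "sqrt (1 + (real j * d - real l * d)^2) \<le> 1" by (simp add: dist_PQ)
  hence "(real j * d - real l * d)^2 \<le> 0" by simp
  hence "real j * d = real l * d" by simp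
  thus "j = l" using d by simp
qed

lemma dist_PQ_same: "dist (PP d j) (QQ d j) = 1"
  by (simp add: dist_PQ)

lemma Arg_PQ: "Arg (QQ d j - PP d j) = 0"
proof -
  have "QQ d j - PP d j = of_real 1" unfolding PP_def QQ_def by (simp add: complex_eq_iff)
  thus ?thesis using Arg_of_real[of 1] by simp
qed
lemma Arg_QP: "Arg (PP d j - QQ d j) = pi"
proof -
  have "PP d j - QQ d j = of_real (-1)" unfolding PP_def QQ_def by (simp add: complex_eq_iff)
  thus ?thesis using Arg_of_real[of "-1"] by simp
qed
lemma Arg_PPv: "d > 0 \<Longrightarrow> l \<noteq> j \<Longrightarrow> \<bar>Arg (PP d l - PP d j)\<bar> = pi/2"
  by (rule Arg_vert) (auto simp: PP_def complex_eq_iff)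
lemma Arg_QQv: "d > 0 \<Longrightarrow> l \<noteq> j \<Longrightarrow> \<bar>Arg (QQ d l - QQ d j)\<bar> = pi/2"
  by (rule Arg_vert) (auto simp: QQ_def complex_eq_iff)

lemma nbP:
  assumes "d > 0" "(PP d j, y) \<in> udg (VV m d)"
  shows "y = QQ d j \<or> (\<exists>l. l \<noteq> j \<and> y = PP d l)"
proof -
  have y: "y \<in> VV m d" "y \<noteq> PP d j" "dist (PP d j) y \<le> 1" using assms(2) unfolding udg_def by auto
  then obtain l where "y = PP d l \<or> y = QQ d l" unfolding VV_def by auto
  thus ?thesis
  proof
    assume "y = QQ d l" thus ?thesis using y dist_PQ_ge[OF assms(1), of j l] by auto
  next
    assume "y = PP d l" thus ?thesis using y by auto
  qed
qed

lemma nbQ: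
  assumes "d > 0" "(QQ d j, y) \<in> udg (VV m d)"
  shows "y = PP d j \<or> (\<exists>l. l \<noteq> j \<and> y = QQ d l)"
proof -
  have y: "y \<in> VV m d" "y \<noteq> QQ d j" "dist (QQ d j) y \<le> 1" using assms(2) unfolding udg_def by auto
  then obtain l where "y = PP d l \<or> y = QQ d l" unfolding VV_def by auto
  thus ?thesis
  proof
    assume "y = PP d l" thus ?thesis using y dist_PQ_ge[OF assms(1), of l j] by (auto simp: dist_commute)
  next
    assume "y = QQ d l" thus ?thesis using y by auto
  qed
qed


lemma VV_fin: "finite (VV m d)" unfolding VV_def by auto

lemma udg_sym: "(x, y) \<in> udg V \<Longrightarrow> (y, x) \<in> udg V"
  unfolding udg_def by (auto simp: dist_commute)

lemma PQ_udg: "j < m \<Longrightarrow> (PP d j, QQ d j) \<in> udg (VV m d)"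
  unfolding udg_def VV_def using PQ_ne dist_PQ_same by auto

lemma E1:
  assumes d: "d > 0" and k: "k \<ge> 6" and j: "j < m"
  shows "(PP d j, QQ d j) \<in> yao phi k ID (VV m d)"
proof -
  define c where "c = cone_of phi k (PP d j) (QQ d j)"
  have ck: "c < k" unfolding c_def using k cone_of_lt by simp
  have N: "{y. (PP d j, y) \<in> udg (VV m d) \<and> incone phi k (PP d j) c y} = {QQ d j}"
  proof (rule set_eqI, rule iffI)
    fix y assume "y \<in> {y. (PP d j, y) \<in> udg (VV m d) \<and> incone phi k (PP d j) c y}"
    hence y: "(PP d j, y) \<in> udg (VV m d)" "cone_of phi k (PP d j) y = c" unfolding incone_def by auto
    show "y \<in> {QQ d j}"
    proof (cases "y = QQ d j")
      case False
      then obtain l where l: "l \<noteq> j" "y = PP d l" using nbP[OF d y(1)] by auto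
      have "c \<noteq> cone_of phi k (PP d j) (PP d l)"
        unfolding c_def by (rule cone_ne[OF k]) (auto simp: Arg_PQ Arg_PPv[OF d l(1)])
      thus ?thesis using y l by simp
    qed simp
  next
    fix y assume "y \<in> {QQ d j}"
    thus "y \<in> {y. (PP d j, y) \<in> udg (VV m d) \<and> incone phi k (PP d j) c y}"
      using PQ_udg[OF j] PQ_ne unfolding incone_def c_def by (auto simp: eq_commute)
  qed
  have P: "PP d j \<in> VV m d" using j unfolding VV_def by auto
  show ?thesis unfolding yao_def Let_def
    by (rule UN_I[OF P], rule UN_I[of c]) (use ck N in \<open>auto simp: amin_single\<close>)
qed

lemma E2:
  assumes d: "d > 0" and k: "k \<ge> 6" and j: "j < m" and ID: "inj_on ID (VV m d)"
  shows "{a. (a, QQ d j) \<in> yao phi k ID (VV m d) \<and> incone phi k (QQ d j) (cone_of phi k (QQ d j) (PP d j)) a} = {PP d j}"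
proof (rule set_eqI, rule iffI)
  let ?c = "cone_of phi k (QQ d j) (PP d j)"
  fix a assume "a \<in> {a. (a, QQ d j) \<in> yao phi k ID (VV m d) \<and> incone phi k (QQ d j) ?c a}"
  hence a: "(a, QQ d j) \<in> yao phi k ID (VV m d)" "cone_of phi k (QQ d j) a = ?c" unfolding incone_def by auto
  have "(QQ d j, a) \<in> udg (VV m d)" using yao_sub[OF ID VV_fin a(1)] udg_sym by blast
  show "a \<in> {PP d j}"
  proof (cases "a = PP d j")
    case False
    then obtain l where l: "l \<noteq> j" "a = QQ d l" using nbQ[OF d \<open>(QQ d j, a) \<in> _\<close>] by auto
    have "?c \<noteq> cone_of phi k (QQ d j) (QQ d l)"
      by (rule cone_ne[OF k]) (auto simp: Arg_QP Arg_QQv[OF d l(1)])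
    thus ?thesis using a l by simp
  qed simp
next
  fix a assume "a \<in> {PP d j}"
  thus "a \<in> {a. (a, QQ d j) \<in> yao phi k ID (VV m d) \<and> incone phi k (QQ d j) (cone_of phi k (QQ d j) (PP d j)) a}"
    using E1[OF d k j] PQ_ne unfolding incone_def by auto
qed


lemma F_eq:
  assumes d: "d > 0" and k: "k \<ge> 6" and j: "j < m" and ID: "inj_on ID (VV m d)"
  shows "{(a, b). (a, b) \<in> yao phi k ID (VV m d) \<and> b = QQ d j \<and>
           incone phi k (QQ d j) (cone_of phi k (QQ d j) (PP d j)) a} = {(PP d j, QQ d j)}"
  using E2[OF assms] by blast

lemma Q_in: "j < m \<Longrightarrow> QQ d j \<in> VV m d" unfolding VV_def by auto

lemma YY_mem:
  assumes d: "d > 0" and k: "k \<ge> 6" and j: "j < m" and ID: "inj_on ID (VV m d)"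
  shows "(PP d j, QQ d j) \<in> yaoyao phi k ID (VV m d)"
proof -
  have ck: "cone_of phi k (QQ d j) (PP d j) < k" using k cone_of_lt by simp
  show ?thesis unfolding yaoyao_def Let_def
    by (rule UN_I[OF Q_in[OF j]], rule UN_I[OF _ ]) (use ck F_eq[OF assms] in \<open>auto simp: amin_single\<close>)
qed

lemma YS_mem:
  assumes d: "d > 0" and k: "k \<ge> 6" and j: "j < m" and ID: "inj_on ID (VV m d)"
  shows "(PP d j, QQ d j) \<in> yaosink phi k ID (VV m d)"
proof -
  let ?c = "cone_of phi k (QQ d j) (PP d j)"
  have ck: "?c < k" using k cone_of_lt by simp
  have inc: "incone phi k (QQ d j) ?c (PP d j)" unfolding incone_def using PQ_ne by auto
  have "(PP d j, QQ d j) \<in> sink_tree phi k ID (Suc (card (VV m d))) (QQ d j)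
          {x. (x, QQ d j) \<in> yao phi k ID (VV m d) \<and> incone phi k (QQ d j) ?c x}"
    by (rule sink_tree_mem[OF ck inc]) (use E2[OF assms] in simp)
  thus ?thesis unfolding yaosink_def sink_def
    by (intro UN_I[OF Q_in[OF j]] UN_I[of ?c]) (use ck in auto)
qed

lemma filt_mem:
  assumes d: "d > 0" and k: "k \<ge> 6" and j: "j < m" and ID: "inj_on ID (VV m d)" and r: "r > 1"
  shows "(PP d j, QQ d j) \<in> filtering phi k ID r (VV m d)"
proof -
  let ?c = "cone_of phi k (QQ d j) (PP d j)"
  have ck: "?c < k" using k cone_of_lt by simp
  have F: "{(a, b). (a, b) \<in> yao phi k ID (VV m d) \<and> b = QQ d j \<and> incone phi k (QQ d j) ?c a} = {(PP d j, QQ d j)}"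
    using F_eq[OF d k j ID] .
  have Fj: "{(a, b) \<in> {(PP d j, QQ d j)}. dist (PP d j) (QQ d j) * r ^ (1 - 1) \<le> dist a b \<and> dist a b < dist (PP d j) (QQ d j) * r ^ 1}
           = {(PP d j, QQ d j)}" using r by (auto simp: dist_PQ_same)
  show ?thesis unfolding filtering_def
    apply (rule UN_I[OF Q_in[OF j]], rule UN_I[OF _ ])
    using ck apply simp
    apply (unfold Let_def F)
    apply (simp only: amin_single fst_conv if_False insert_not_empty)
    apply (rule UN_I[of 1])
     apply simp
    apply (simp only: Fj amin_single if_False insert_not_empty)
    apply simp
    done
qed

lemma YES_mem:
  assumes d: "d > 0" and k: "k \<ge> 6" and j: "j < m" and ID: "inj_on ID (VV m d)" and r: "r > 1"
  shows "(PP d j, QQ d j) \<in> yaosparsesink phi k ID r (VV m d)"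
proof -
  let ?c = "cone_of phi k (QQ d j) (PP d j)"
  have ck: "?c < k" using k cone_of_lt by simp
  have inc: "incone phi k (QQ d j) ?c (PP d j)" unfolding incone_def using PQ_ne by auto
  have S: "{x. (x, QQ d j) \<in> filtering phi k ID r (VV m d) \<and> incone phi k (QQ d j) ?c x} = {PP d j}"
    using E2[OF d k j ID] filt_mem[OF assms] filtering_sub[OF ID VV_fin] inc by blast
  have "(PP d j, QQ d j) \<in> sink_tree phi k ID (Suc (card (VV m d))) (QQ d j)
          {x. (x, QQ d j) \<in> filtering phi k ID r (VV m d) \<and> incone phi k (QQ d j) ?c x}"
    by (rule sink_tree_mem[OF ck inc S])
  thus ?thesis unfolding yaosparsesink_def sink_def
    by (intro UN_I[OF Q_in[OF j]] UN_I[of ?c]) (use ck in auto)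
qed


lemma wt_ge:
  assumes d: "d > 0" and fin: "finite D" and mem: "\<forall>j<m. (PP d j, QQ d j) \<in> D"
  shows "real m \<le> wt D"
proof -
  let ?g = "\<lambda>p. dist (fst p) (snd p)"
  let ?A = "(\<lambda>j. (PP d j, QQ d j)) ` {..<m}"
  let ?B = "(\<lambda>j. (QQ d j, PP d j)) ` {..<m}"
  have injA: "inj_on (\<lambda>j. (PP d j, QQ d j)) {..<m}" using PP_inj[OF d] by (auto simp: inj_on_def)
  have injB: "inj_on (\<lambda>j. (QQ d j, PP d j)) {..<m}" using PP_inj[OF d] by (auto simp: inj_on_def)
  have sA: "sum ?g ?A = real m"
    using injA by (simp add: sum.reindex dist_PQ_same)
  have sB: "sum ?g ?B = real m"
    using injB by (simp add: sum.reindex dist_PQ_same dist_commute)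
  have disj: "?A \<inter> ?B = {}" using PQ_ne by auto
  have "sum ?g (?A \<union> ?B) = 2 * real m"
    using sum.union_disjoint[of ?A ?B ?g] disj sA sB by simp
  moreover have "sum ?g (?A \<union> ?B) \<le> sum ?g (D \<union> converse D)"
    using mem fin by (intro sum_mono2) auto
  ultimately show ?thesis unfolding wt_def by simp
qed

lemma elen_pair: "elen {a, b} = dist a b"
  unfolding elen_def
proof (rule the_equality)
  show "\<exists>x y. {a, b} = {x, y} \<and> dist a b = dist x y" by blast
next
  fix d assume "\<exists>x y. {a, b} = {x, y} \<and> d = dist x y"
  then obtain x y where "{a, b} = {x, y}" "d = dist x y" by blast
  thus "d = dist a b" by (auto simp: doubleton_eq_iff dist_commute)
qed

lemma card_VV: "d > 0 \<Longrightarrow> card (VV m d) = 2 * m"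
proof -
  assume d: "d > 0"
  have "inj_on (PP d) {..<m}" "inj_on (QQ d) {..<m}" using PP_inj[OF d] QQ_inj[OF d] by (auto simp: inj_on_def)
  moreover have "PP d ` {..<m} \<inter> QQ d ` {..<m} = {}" using PQ_ne by auto
  ultimately show ?thesis unfolding VV_def by (simp add: card_Un_disjoint card_image)
qed


lemma MST_le:
  assumes d: "d > 0" and m: "m \<ge> 1" and small: "2 * real m * (real m * d) \<le> 1"
  shows "wt_MST (VV m d) \<le> 2"
proof -
  let ?V = "VV m d"
  let ?A = "PP d ` {..<m}"
  define f where "f x = (if x \<in> ?A \<or> x = QQ d 0 then PP d 0 else QQ d 0)" for x
  define T where "T = (\<lambda>x. {f x, x}) ` (?V - {PP d 0})"
  have P0: "PP d 0 \<in> ?V" and Q0: "QQ d 0 \<in> ?V" using m unfolding VV_def by auto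
  have fV: "f x \<in> ?V" for x using P0 Q0 unfolding f_def by auto
  have fne: "f x \<noteq> x" if "x \<in> ?V - {PP d 0}" for x
    using that PQ_ne unfolding f_def VV_def by auto
  have f01: "f x = PP d 0 \<or> f x = QQ d 0" for x unfolding f_def by auto
  have fQ0: "f (QQ d 0) = PP d 0" unfolding f_def by auto
  have inj: "inj_on (\<lambda>x. {f x, x}) (?V - {PP d 0})"
  proof (rule inj_onI)
    fix x y assume x: "x \<in> ?V - {PP d 0}" and y: "y \<in> ?V - {PP d 0}" and e: "{f x, x} = {f y, y}"
    show "x = y"
    proof (rule ccontr)
      assume "x \<noteq> y"
      hence xy: "x = f y" "y = f x" using e by (auto simp: doubleton_eq_iff)
      have "x = QQ d 0" using f01[of y] xy(1) x by auto
      hence "y = PP d 0" using xy(2) fQ0 by metis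
      thus False using y by simp
    qed
  qed
  have span: "spanning_tree ?V T"
    unfolding spanning_tree_def
  proof (intro conjI ballI)
    show "T \<subseteq> {{x, y} |x y. x \<in> ?V \<and> y \<in> ?V \<and> x \<noteq> y}"
    proof
      fix e assume "e \<in> T"
      then obtain x where x: "x \<in> ?V - {PP d 0}" "e = {f x, x}" unfolding T_def by blast
      show "e \<in> {{x, y} |x y. x \<in> ?V \<and> y \<in> ?V \<and> x \<noteq> y}"
        using x fV[of x] fne[OF x(1)] by blast
    qed
    show "card T = card ?V - 1" unfolding T_def using inj P0 VV_fin
      by (simp add: card_image)
    fix x y assume x: "x \<in> ?V" and y: "y \<in> ?V"
    let ?R = "{(a, b). {a, b} \<in> T}"
    have m0: "{PP d 0, QQ d 0} \<in> T" unfolding T_def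
    proof (rule image_eqI[of _ _ "QQ d 0"])
      show "{PP d 0, QQ d 0} = {f (QQ d 0), QQ d 0}" using fQ0 by simp
      show "QQ d 0 \<in> ?V - {PP d 0}" using Q0 PQ_ne by (metis Diff_iff singletonD)
    qed
    have RQ: "(QQ d 0, PP d 0) \<in> ?R" "(PP d 0, QQ d 0) \<in> ?R"
      using m0 by (auto simp: insert_commute)
    have toP: "(z, PP d 0) \<in> ?R\<^sup>*" "(PP d 0, z) \<in> ?R\<^sup>*" if z: "z \<in> ?V" for z
    proof -
      have "(z, PP d 0) \<in> ?R\<^sup>* \<and> (PP d 0, z) \<in> ?R\<^sup>*"
      proof (cases "z = PP d 0")
        case False
        hence zT: "{f z, z} \<in> T" using z unfolding T_def by auto
        hence e1: "(z, f z) \<in> ?R" "(f z, z) \<in> ?R" by (auto simp: insert_commute)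
        have "(f z, PP d 0) \<in> ?R\<^sup>* \<and> (PP d 0, f z) \<in> ?R\<^sup>*"
          using f01[of z] RQ by auto
        thus ?thesis using converse_rtrancl_into_rtrancl[OF e1(1)] rtrancl_into_rtrancl[OF _ e1(2)] by blast
      qed simp
      thus "(z, PP d 0) \<in> ?R\<^sup>*" "(PP d 0, z) \<in> ?R\<^sup>*" by auto
    qed
    show "(x, y) \<in> ?R\<^sup>*" using rtrancl_trans[OF toP(1)[OF x] toP(2)[OF y]] .
  qed
  have finS: "finite {T. spanning_tree ?V T}"
  proof -
    have "{{x, y} |x y. x \<in> ?V \<and> y \<in> ?V \<and> x \<noteq> y} \<subseteq> (\<lambda>(x, y). {x, y}) ` (?V \<times> ?V)" by auto
    hence "finite {{x, y} |x y. x \<in> ?V \<and> y \<in> ?V \<and> x \<noteq> y}" by (rule finite_subset) (simp add: VV_fin)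
    moreover have "{T. spanning_tree ?V T} \<subseteq> Pow {{x, y} |x y. x \<in> ?V \<and> y \<in> ?V \<and> x \<noteq> y}"
      unfolding spanning_tree_def by blast
    ultimately show ?thesis by (simp add: finite_subset)
  qed
  have wT: "(\<Sum>e\<in>T. elen e) = (\<Sum>x\<in>?V - {PP d 0}. dist (f x) x)"
    unfolding T_def using inj by (simp add: sum.reindex elen_pair)
  have QV: "QQ d 0 \<in> ?V - {PP d 0}" using Q0 PQ_ne[of d 0 0] by auto
  have "(\<Sum>x\<in>?V - {PP d 0}. dist (f x) x) = dist (f (QQ d 0)) (QQ d 0) + (\<Sum>x\<in>?V - {PP d 0} - {QQ d 0}. dist (f x) x)"
    using sum.remove[OF _ QV] VV_fin by auto
  also have "dist (f (QQ d 0)) (QQ d 0) = 1" using fQ0 dist_PQ_same by simp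
  also have "(\<Sum>x\<in>?V - {PP d 0} - {QQ d 0}. dist (f x) x) \<le> real (card (?V - {PP d 0} - {QQ d 0})) * (real m * d)"
  proof (rule sum_bounded_above)
    fix x assume x: "x \<in> ?V - {PP d 0} - {QQ d 0}"
    then obtain l where l: "l < m" "x = PP d l \<or> x = QQ d l" unfolding VV_def by auto
    have "real l * d \<le> real m * d" using l(1) d by simp
    have ld: "\<bar>0 * d - real l * d\<bar> \<le> real m * d" using \<open>real l * d \<le> real m * d\<close> d by simp
    from l(2) show "dist (f x) x \<le> real m * d"
    proof
      assume xl: "x = PP d l"
      hence "f x = PP d 0" unfolding f_def using l(1) by auto
      thus ?thesis using xl ld dist_PP[of d 0 l] by simp
    next
      assume xl: "x = QQ d l"
      have "x \<notin> ?A" using xl PQ_ne by (metis (no_types, lifting) imageE)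
      hence "f x = QQ d 0" unfolding f_def using x by auto
      thus ?thesis using xl ld dist_QQ[of d 0 l] by simp
    qed
  qed
  also have "real (card (?V - {PP d 0} - {QQ d 0})) * (real m * d) \<le> 2 * real m * (real m * d)"
  proof (rule mult_right_mono)
    have "card (?V - {PP d 0} - {QQ d 0}) \<le> card ?V" using VV_fin by (intro card_mono) auto
    thus "real (card (?V - {PP d 0} - {QQ d 0})) \<le> 2 * real m" using card_VV[OF d] by simp
  qed (use d in simp)
  finally have "(\<Sum>e\<in>T. elen e) \<le> 2" using wT small by simp
  moreover have "wt_MST ?V \<le> (\<Sum>e\<in>T. elen e)"
    unfolding wt_MST_def using span finS by (intro Min_le) auto
  ultimately show ?thesis by simp
qed


theorem mainTheorem7:
  fixes k :: nat and r :: real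
  assumes "k \<ge> 6" and "r > 1"
  shows "\<exists>c>0. \<forall>phi::real. \<forall>n::nat. even n \<and> n \<ge> 2 \<longrightarrow>
           (\<exists>(V::complex set) (ID::complex \<Rightarrow> nat).
              finite V \<and> card V = n \<and> inj_on ID V \<and>
              wt (yaoyao phi k ID V) \<ge> c * real n * wt_MST V \<and>
              wt (yaosink phi k ID V) \<ge> c * real n * wt_MST V \<and>
              wt (yaosparsesink phi k ID r V) \<ge> c * real n * wt_MST V)"
proof (intro exI[of _ "1/4"] conjI allI impI)
  show "(0::real) < 1/4" by simp
  fix phi :: real and n :: nat
  assume n: "even n \<and> n \<ge> 2"
  define m where "m = n div 2"
  have nm: "n = 2 * m" using n unfolding m_def by simp
  have m1: "m \<ge> 1" using n nm by simp
  define d :: real where "d = 1 / (real n)^2"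
  have d: "d > 0" using n unfolding d_def by simp
  have small: "2 * real m * (real m * d) \<le> 1"
  proof -
    have "real m > 0" using m1 by simp
    have "2 * real m * (real m * d) = 1/2" unfolding d_def nm using \<open>real m > 0\<close> by (simp add: field_simps power2_eq_square)
    thus ?thesis by simp
  qed
  let ?V = "VV m d"
  obtain ID :: "complex \<Rightarrow> nat" and N where ID: "ID ` ?V = {i. i < N}" "inj_on ID ?V"
    using finite_imp_inj_to_nat_seg[OF VV_fin] by blast
  have MST: "1/4 * real n * wt_MST ?V \<le> real m"
  proof -
    have "1/4 * real n * wt_MST ?V \<le> 1/4 * real n * 2"
      using MST_le[OF d m1 small] by (intro mult_left_mono) auto
    thus ?thesis using nm by simp
  qed
  have E: "\<forall>j<m. (PP d j, QQ d j) \<in> yaoyao phi k ID ?V"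
          "\<forall>j<m. (PP d j, QQ d j) \<in> yaosink phi k ID ?V"
          "\<forall>j<m. (PP d j, QQ d j) \<in> yaosparsesink phi k ID r ?V"
    using YY_mem[OF d assms(1) _ ID(2)] YS_mem[OF d assms(1) _ ID(2)]
      YES_mem[OF d assms(1) _ ID(2) assms(2)] by auto
  have F: "finite (yaoyao phi k ID ?V)" "finite (yaosink phi k ID ?V)" "finite (yaosparsesink phi k ID r ?V)"
    using yaoyao_fin[OF VV_fin] sink_fin[OF VV_fin] unfolding yaosink_def yaosparsesink_def by auto
  show "\<exists>(V::complex set) (ID::complex \<Rightarrow> nat).
              finite V \<and> card V = n \<and> inj_on ID V \<and>
              wt (yaoyao phi k ID V) \<ge> 1/4 * real n * wt_MST V \<and>
              wt (yaosink phi k ID V) \<ge> 1/4 * real n * wt_MST V \<and>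
              wt (yaosparsesink phi k ID r V) \<ge> 1/4 * real n * wt_MST V"
  proof (intro exI[of _ ?V] exI[of _ ID] conjI)
    show "finite ?V" by (rule VV_fin)
    show "card ?V = n" using card_VV[OF d] nm by simp
    show "inj_on ID ?V" by (rule ID(2))
    show "1/4 * real n * wt_MST ?V \<le> wt (yaoyao phi k ID ?V)"
      using MST wt_ge[OF d F(1) E(1)] by linarith
    show "1/4 * real n * wt_MST ?V \<le> wt (yaosink phi k ID ?V)"
      using MST wt_ge[OF d F(2) E(2)] by linarith
    show "1/4 * real n * wt_MST ?V \<le> wt (yaosparsesink phi k ID r ?V)"
      using MST wt_ge[OF d F(3) E(3)] by linarith
  qed
qed

end
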